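(* Let $\{(X_s,\tau_s):s\in S\}$ be a family of fuzzifying topological spaces, $X=\prod_{s\in S}X_s$, and let $\Pi=\prod_{s\in S}(\tau_P)_s\in\Im(P(X))$ be the product pre-open family described below. Then $$\sup_{U\subseteq X}\min\Big(\Gamma(U,\Pi/U),\ \sup_{x\in X}N^\Pi_x(U)\Big)\ \le\ \sup_{T\subseteq S,\ T\text{ finite}}\ \inf_{t\in S\setminus T}\Gamma(X_t,(\tau_P)_t).$$
   Context: Fuzzy subsets of $Y$ are maps $Y\to[0,1]$ ($\Im(Y)$); $P(X)$ is the power set. A fuzzifying topology on a set $Z$ is $\tau\in\Im(P(Z))$ with $\tau(Z)=1$, closed (in degree) under finite intersections ($\tau(A\cap B)\ge\min$) and arbitrary unions ($\tau(\bigcup A_\lambda)\ge\inf$). For such $\tau$: $N_x(A)=\sup_{x\in B\subseteq A}\tau(B)$, $Cl(A)(x)=1-N_x(Z\setminus A)$, for $\mu\in\Im(Z)$ $Int(\mu)(x)=\sup_{x\in B}\min(\tau(B),\inf_{y\in B}\mu(y))$, and the fuzzifying pre-open sets are $\tau_P(A)=\inf_{x\in A}Int(Cl(A))(x)$. For the product: $p_s:X\to X_s$ are projections, $\varphi=\{p_s^{-1}(U_s):s\in S,U_s\subseteq X_s\}$; a finite $\Phi\subseteq\varphi$ is written $\Phi=\{p_s^{-1}(V_s):s\in S(\Phi)\}$; $\beta_P(V)=\sup\{\inf_{s\in S(\Phi)}(\tau_P)_s(V_s):\Phi\subseteq\varphi\text{ finite},\ \bigcap\Phi=V\}$, and $\Pi(A)=\sup\{\inf_\lambda\beta_P(B_\lambda):\bigcup_\lambda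 B_\lambda=A\}$. $N^\Pi_x(U)=\sup_{x\in V\subseteq U}\Pi(V)$. For $U\subseteq X$, $(\Pi/U)(B)=\sup\{\Pi(V):V\cap U=B\}$. Compactness degree: for a set $A$ and $\rho\in\Im(P(A))$, with $K(\Re,A)=\inf_{x\in A}\sup_{B\ni x}\Re(B)$, $[\Re\subseteq\rho]=\inf_B\min(1,1-\Re(B)+\rho(B))$, $\wp\le\Re$ meaning pointwise $\le$, and $FF(\wp)=1-\inf\{\delta\in[0,1]:\{B:\wp(B)>\delta\}\text{ finite}\}$, set $\Gamma(A,\rho)=\inf_{\Re\in\Im(P(A))}\min\big(1,1-\max(0,K(\Re,A)+[\Re\subseteq\rho]-1)+\sup_{\wp\le\Re}\max(0,K(\wp,A)+FF(\wp)-1)\big)$. Thus $\Gamma(X_t,(\tau_P)_t)$ is the degree of fuzzifying strong compactness of $(X_t,\tau_t)$. *)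

theory Defs
  imports Main "HOL-Library.FuncSet" Complex_Main
begin

definition fsup :: "real set \<Rightarrow> real" where
  "fsup A = (if A = {} then 0 else Sup A)"
definition finf :: "real set \<Rightarrow> real" where
  "finf A = (if A = {} then 1 else Inf A)"

text \<open>A fuzzy subset of P(Z): a map into [0,1] (only values on subsets of Z matter).\<close>
definition fuzzy_on_pow :: "'a set \<Rightarrow> ('a set \<Rightarrow> real) \<Rightarrow> bool" where
  "fuzzy_on_pow Z R \<longleftrightarrow> (\<forall>B. B \<subseteq> Z \<longrightarrow> 0 \<le> R B \<and> R B \<le> 1)"

definition fuzzifying_topology :: "'a set \<Rightarrow> ('a set \<Rightarrow> real) \<Rightarrow> bool" where
  "fuzzifying_topology Z \<tau> \<longleftrightarrow>
     fuzzy_on_pow Z \<tau> \<and> \<tau> Z = 1 \<and>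
     (\<forall>A B. A \<subseteq> Z \<longrightarrow> B \<subseteq> Z \<longrightarrow> \<tau> (A \<inter> B) \<ge> min (\<tau> A) (\<tau> B)) \<and>
     (\<forall>F. F \<subseteq> Pow Z \<longrightarrow> \<tau> (\<Union>F) \<ge> finf (\<tau> ` F))"

definition fnbhd :: "('a set \<Rightarrow> real) \<Rightarrow> 'a \<Rightarrow> 'a set \<Rightarrow> real" where
  "fnbhd \<tau> x A = fsup {\<tau> B | B. x \<in> B \<and> B \<subseteq> A}"

definition fcl :: "'a set \<Rightarrow> ('a set \<Rightarrow> real) \<Rightarrow> 'a set \<Rightarrow> 'a \<Rightarrow> real" where
  "fcl Z \<tau> A x = 1 - fnbhd \<tau> x (Z - A)"

definition fint :: "'a set \<Rightarrow> ('a set \<Rightarrow> real) \<Rightarrow> ('a \<Rightarrow> real) \<Rightarrow> 'a \<Rightarrow> real" where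
  "fint Z \<tau> \<mu> x = fsup {min (\<tau> B) (finf (\<mu> ` B)) | B. x \<in> B \<and> B \<subseteq> Z}"

definition preopen :: "'a set \<Rightarrow> ('a set \<Rightarrow> real) \<Rightarrow> 'a set \<Rightarrow> real" where
  "preopen Z \<tau> A = finf {fint Z \<tau> (fcl Z \<tau> A) x | x. x \<in> A}"

text \<open>Subbase-generated base \<open>\<beta>_P\<close> of the product: finite families of cylinders
  \<open>p_s^{-1}(V_s)\<close>, \<open>s \<in> T\<close> (T finite), with intersection V (empty intersection = X).\<close>
definition prod_beta :: "'s set \<Rightarrow> ('s \<Rightarrow> 'a set) \<Rightarrow> ('s \<Rightarrow> 'a set \<Rightarrow> real)
    \<Rightarrow> ('s \<Rightarrow> 'a) set \<Rightarrow> real" where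
  "prod_beta S Xs \<tau> V = fsup {finf {preopen (Xs s) (\<tau> s) (Vs s) | s. s \<in> T} | T Vs.
      finite T \<and> T \<subseteq> S \<and> (\<forall>s\<in>T. Vs s \<subseteq> Xs s) \<and>
      {f \<in> PiE S Xs. \<forall>s\<in>T. f s \<in> Vs s} = V}"

definition prod_pre :: "'s set \<Rightarrow> ('s \<Rightarrow> 'a set) \<Rightarrow> ('s \<Rightarrow> 'a set \<Rightarrow> real)
    \<Rightarrow> ('s \<Rightarrow> 'a) set \<Rightarrow> real" where
  "prod_pre S Xs \<tau> A = fsup {finf (prod_beta S Xs \<tau> ` \<B>) | \<B>. \<Union>\<B> = A}"

definition frestrict :: "'a set \<Rightarrow> ('a set \<Rightarrow> real) \<Rightarrow> 'a set \<Rightarrow> 'a set \<Rightarrow> real" where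
  "frestrict X P U B = fsup {P V | V. V \<subseteq> X \<and> V \<inter> U = B}"

definition Kdeg :: "('a set \<Rightarrow> real) \<Rightarrow> 'a set \<Rightarrow> real" where
  "Kdeg R A = finf {fsup {R B | B. x \<in> B \<and> B \<subseteq> A} | x. x \<in> A}"

definition fincl :: "'a set \<Rightarrow> ('a set \<Rightarrow> real) \<Rightarrow> ('a set \<Rightarrow> real) \<Rightarrow> real" where
  "fincl A R \<rho> = finf {min 1 (1 - R B + \<rho> B) | B. B \<subseteq> A}"

definition FF :: "'a set \<Rightarrow> ('a set \<Rightarrow> real) \<Rightarrow> real" where
  "FF A W = 1 - finf {\<delta>. 0 \<le> \<delta> \<and> \<delta> \<le> 1 \<and> finite {B. B \<subseteq> A \<and> W B > \<delta>}}"

definition Gamma :: "'a set \<Rightarrow> ('a set \<Rightarrow> real) \<Rightarrow> real" where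
  "Gamma A \<rho> = finf {min 1 (1 - max 0 (Kdeg R A + fincl A R \<rho> - 1)
        + fsup {max 0 (Kdeg W A + FF A W - 1) | W.
                  fuzzy_on_pow A W \<and> (\<forall>B. B \<subseteq> A \<longrightarrow> W B \<le> R B)}) | R.
        fuzzy_on_pow A R}"

end

theory Submission
  imports Defs
begin

lemma fsup_le: "(\<forall>a\<in>A. a \<le> c) \<Longrightarrow> 0 \<le> c \<Longrightarrow> fsup A \<le> c"
  unfolding fsup_def by (auto intro: cSup_least)

lemma fsup_ge: "a \<in> A \<Longrightarrow> \<forall>b\<in>A. b \<le> 1 \<Longrightarrow> a \<le> fsup A"
  unfolding fsup_def by (auto intro!: cSup_upper bdd_aboveI)

lemma finf_ge: "(\<forall>a\<in>A. c \<le> a) \<Longrightarrow> c \<le> 1 \<Longrightarrow> c \<le> finf A"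
  unfolding finf_def by (auto intro: cInf_greatest)

lemma finf_le: "a \<in> A \<Longrightarrow> \<forall>b\<in>A. 0 \<le> b \<Longrightarrow> finf A \<le> a"
  unfolding finf_def by (auto intro!: cInf_lower bdd_belowI)

lemma fsup01: "(\<forall>a\<in>A. 0 \<le> a \<and> a \<le> 1) \<Longrightarrow> 0 \<le> fsup A \<and> fsup A \<le> 1"
proof -
  assume h: "\<forall>a\<in>A. 0 \<le> a \<and> a \<le> 1"
  show ?thesis
  proof (cases "A = {}")
    case True then show ?thesis by (simp add: fsup_def)
  next
    case False
    then obtain a where "a \<in> A" by auto
    then have "a \<le> fsup A" using h fsup_ge by blast
    moreover have "fsup A \<le> 1" using h by (intro fsup_le) auto
    ultimately show ?thesis using h \<open>a\<in>A\<close> by force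
  qed
qed

lemma finf01: "(\<forall>a\<in>A. 0 \<le> a \<and> a \<le> 1) \<Longrightarrow> 0 \<le> finf A \<and> finf A \<le> 1"
proof -
  assume h: "\<forall>a\<in>A. 0 \<le> a \<and> a \<le> 1"
  show ?thesis
  proof (cases "A = {}")
    case True then show ?thesis by (simp add: finf_def)
  next
    case False
    then obtain a where "a \<in> A" by auto
    then have "finf A \<le> a" using h finf_le by blast
    moreover have "0 \<le> finf A" using h by (intro finf_ge) auto
    ultimately show ?thesis using h \<open>a\<in>A\<close> by force
  qed
qed

lemma Kdeg01: "\<forall>B. B\<subseteq>A \<longrightarrow> 0\<le>R B \<and> R B\<le>1 \<Longrightarrow> 0 \<le> Kdeg R A \<and> Kdeg R A \<le> 1"
  unfolding Kdeg_def by (rule finf01) (auto intro!: fsup01)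

lemma FF01: "0 \<le> FF A W \<and> FF A W \<le> 1"
proof -
  have "0 \<le> finf {\<delta>. 0 \<le> \<delta> \<and> \<delta> \<le> 1 \<and> finite {B. B \<subseteq> A \<and> W B > \<delta>}} \<and>
        finf {\<delta>. 0 \<le> \<delta> \<and> \<delta> \<le> 1 \<and> finite {B. B \<subseteq> A \<and> W B > \<delta>}} \<le> 1"
    by (rule finf01) auto
  then show ?thesis unfolding FF_def by linarith
qed

lemma fincl01: "\<forall>B. B\<subseteq>A \<longrightarrow> 0\<le>R B \<and> R B\<le>1 \<Longrightarrow> \<forall>B. B\<subseteq>A \<longrightarrow> 0\<le>\<rho> B \<and> \<rho> B\<le>1
   \<Longrightarrow> 0 \<le> fincl A R \<rho> \<and> fincl A R \<rho> \<le> 1"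
  unfolding fincl_def by (rule finf01) force

definition gel :: "'a set \<Rightarrow> ('a set \<Rightarrow> real) \<Rightarrow> ('a set \<Rightarrow> real) \<Rightarrow> real" where
  "gel A \<rho> R = min 1 (1 - max 0 (Kdeg R A + fincl A R \<rho> - 1)
        + fsup {max 0 (Kdeg W A + FF A W - 1) | W.
                  fuzzy_on_pow A W \<and> (\<forall>B. B \<subseteq> A \<longrightarrow> W B \<le> R B)})"

lemma Gamma_gel: "Gamma A \<rho> = finf {gel A \<rho> R | R. fuzzy_on_pow A R}"
  unfolding Gamma_def gel_def by simp

lemma gel01: "fuzzy_on_pow A R \<Longrightarrow> \<forall>B. B\<subseteq>A \<longrightarrow> 0\<le>\<rho> B \<and> \<rho> B\<le>1
   \<Longrightarrow> 0 \<le> gel A \<rho> R \<and> gel A \<rho> R \<le> 1"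
proof -
  assume R: "fuzzy_on_pow A R" and r: "\<forall>B. B\<subseteq>A \<longrightarrow> 0\<le>\<rho> B \<and> \<rho> B\<le>1"
  have K: "0 \<le> Kdeg R A \<and> Kdeg R A \<le> 1" using R unfolding fuzzy_on_pow_def by (intro Kdeg01) auto
  have I: "0 \<le> fincl A R \<rho> \<and> fincl A R \<rho> \<le> 1" using R r unfolding fuzzy_on_pow_def by (intro fincl01) auto
  have F: "0 \<le> fsup {max 0 (Kdeg W A + FF A W - 1) | W.
                  fuzzy_on_pow A W \<and> (\<forall>B. B \<subseteq> A \<longrightarrow> W B \<le> R B)}"
  proof -
    have "\<forall>a\<in>{max 0 (Kdeg W A + FF A W - 1) | W.
                  fuzzy_on_pow A W \<and> (\<forall>B. B \<subseteq> A \<longrightarrow> W B \<le> R B)}. 0 \<le> a \<and> a \<le> 1"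
    proof
      fix a assume "a \<in> {max 0 (Kdeg W A + FF A W - 1) | W.
                  fuzzy_on_pow A W \<and> (\<forall>B. B \<subseteq> A \<longrightarrow> W B \<le> R B)}"
      then obtain W where a: "a = max 0 (Kdeg W A + FF A W - 1)" and W: "fuzzy_on_pow A W" by auto
      have "0 \<le> Kdeg W A \<and> Kdeg W A \<le> 1" using W unfolding fuzzy_on_pow_def by (intro Kdeg01) auto
      then show "0 \<le> a \<and> a \<le> 1" using a FF01[of A W] by auto
    qed
    then show ?thesis using fsup01 by blast
  qed
  show ?thesis unfolding gel_def using K I F by auto
qed

lemma Gamma01: "\<forall>B. B\<subseteq>A \<longrightarrow> 0\<le>\<rho> B \<and> \<rho> B\<le>1 \<Longrightarrow> 0 \<le> Gamma A \<rho> \<and> Gamma A \<rho> \<le> 1"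
  unfolding Gamma_gel by (rule finf01) (auto dest: gel01)


lemma sat_img: "f ` U = Y \<Longrightarrow> W \<subseteq> Y \<Longrightarrow> f ` (U \<inter> f -` W) = W"
  by auto

lemma Kdeg_trans:
  assumes img: "f ` U = Y" and Q01: "\<forall>B. B\<subseteq>U \<longrightarrow> 0 \<le> Q B \<and> Q B \<le> 1"
    and Q'01: "\<forall>W. W\<subseteq>Y \<longrightarrow> 0\<le>Q' W \<and> Q' W \<le> 1"
    and eq: "\<forall>W. W\<subseteq>Y \<longrightarrow> Q (U \<inter> f -` W) = Q' W"
    and z: "\<forall>B. B \<subseteq> U \<longrightarrow> B \<noteq> U \<inter> f -` (f ` B) \<longrightarrow> Q B \<le> 0"
  shows "Kdeg Q U = Kdeg Q' Y"
proof -
  have inner: "fsup {Q B | B. u\<in>B \<and> B\<subseteq>U} = fsup {Q' W | W. f u \<in> W \<and> W \<subseteq> Y}" if u: "u \<in> U" for u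
  proof (rule antisym)
    have b1: "\<forall>b\<in>{Q' W | W. f u \<in> W \<and> W \<subseteq> Y}. 0 \<le> b \<and> b \<le> 1" using Q'01 by auto
    have b2: "\<forall>b\<in>{Q B | B. u\<in>B \<and> B\<subseteq>U}. 0 \<le> b \<and> b \<le> 1" using Q01 by auto
    show "fsup {Q B | B. u\<in>B \<and> B\<subseteq>U} \<le> fsup {Q' W | W. f u \<in> W \<and> W \<subseteq> Y}"
    proof (rule fsup_le)
      show "0 \<le> fsup {Q' W | W. f u \<in> W \<and> W \<subseteq> Y}" using fsup01[OF b1] by blast
      show "\<forall>a\<in>{Q B | B. u\<in>B \<and> B\<subseteq>U}. a \<le> fsup {Q' W | W. f u \<in> W \<and> W \<subseteq> Y}"
      proof
        fix a assume "a \<in> {Q B | B. u\<in>B \<and> B\<subseteq>U}"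
        then obtain B where a: "a = Q B" and B: "u \<in> B" "B \<subseteq> U" by auto
        show "a \<le> fsup {Q' W | W. f u \<in> W \<and> W \<subseteq> Y}"
        proof (cases "B = U \<inter> f -` (f ` B)")
          case True
          have fB: "f ` B \<subseteq> Y" using B img by auto
          have "Q' (f ` B) = Q (U \<inter> f -` (f ` B))" using eq fB by simp
          also have "\<dots> = Q B" by (simp only: True[symmetric])
          finally have e: "Q' (f ` B) = Q B" .
          have "Q' (f ` B) \<in> {Q' W | W. f u \<in> W \<and> W \<subseteq> Y}" using B fB by auto
          then have "Q' (f ` B) \<le> fsup {Q' W | W. f u \<in> W \<and> W \<subseteq> Y}" using b1 by (intro fsup_ge) auto
          then show ?thesis using a e by simp
        next
          case False
          then have "a \<le> 0" using z a B by auto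
          then show ?thesis using fsup01[OF b1] by linarith
        qed
      qed
    qed
    show "fsup {Q' W | W. f u \<in> W \<and> W \<subseteq> Y} \<le> fsup {Q B | B. u\<in>B \<and> B\<subseteq>U}"
    proof (rule fsup_le)
      show "0 \<le> fsup {Q B | B. u\<in>B \<and> B\<subseteq>U}" using fsup01[OF b2] by blast
      show "\<forall>a\<in>{Q' W | W. f u \<in> W \<and> W \<subseteq> Y}. a \<le> fsup {Q B | B. u\<in>B \<and> B\<subseteq>U}"
      proof
        fix a assume "a \<in> {Q' W | W. f u \<in> W \<and> W \<subseteq> Y}"
        then obtain W where a: "a = Q' W" and W: "f u \<in> W" "W \<subseteq> Y" by auto
        have "Q (U \<inter> f -` W) \<in> {Q B | B. u\<in>B \<and> B\<subseteq>U}" using W u by auto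
        then have "Q (U \<inter> f -` W) \<le> fsup {Q B | B. u\<in>B \<and> B\<subseteq>U}" using b2 by (intro fsup_ge) auto
        moreover have "Q (U \<inter> f -` W) = a" using a eq W by simp
        ultimately show "a \<le> fsup {Q B | B. u\<in>B \<and> B\<subseteq>U}" by simp
      qed
    qed
  qed
  have "{fsup {Q B | B. u\<in>B \<and> B\<subseteq>U} | u. u \<in> U} = {fsup {Q' W | W. y \<in> W \<and> W \<subseteq> Y} | y. y \<in> Y}"
  proof (intro equalityI subsetI)
    fix a assume "a \<in> {fsup {Q B | B. u\<in>B \<and> B\<subseteq>U} | u. u \<in> U}"
    then obtain u where "u \<in> U" "a = fsup {Q B | B. u\<in>B \<and> B\<subseteq>U}" by auto
    then show "a \<in> {fsup {Q' W | W. y \<in> W \<and> W \<subseteq> Y} | y. y \<in> Y}" using inner img by blast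
  next
    fix a assume "a \<in> {fsup {Q' W | W. y \<in> W \<and> W \<subseteq> Y} | y. y \<in> Y}"
    then obtain y where "y \<in> Y" "a = fsup {Q' W | W. y \<in> W \<and> W \<subseteq> Y}" by auto
    then obtain u where "u \<in> U" "f u = y" using img by auto
    then have "a = fsup {Q B | B. u\<in>B \<and> B\<subseteq>U}" using inner \<open>a = _\<close> by simp
    then show "a \<in> {fsup {Q B | B. u\<in>B \<and> B\<subseteq>U} | u. u \<in> U}" using \<open>u \<in> U\<close> by blast
  qed
  then show ?thesis unfolding Kdeg_def by simp
qed

lemma FF_trans:
  assumes img: "f ` U = Y"
    and eq: "\<forall>W. W\<subseteq>Y \<longrightarrow> Q (U \<inter> f -` W) = Q' W"
    and z: "\<forall>B. B \<subseteq> U \<longrightarrow> B \<noteq> U \<inter> f -` (f ` B) \<longrightarrow> Q B \<le> 0"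
  shows "FF U Q = FF Y Q'"
proof -
  have inj: "inj_on (\<lambda>W. U \<inter> f -` W) (Pow Y)"
    by (rule inj_on_inverseI[where g="\<lambda>B. f ` B"]) (use img in auto)
  have "finite {B. B \<subseteq> U \<and> Q B > \<delta>} \<longleftrightarrow> finite {W. W \<subseteq> Y \<and> Q' W > \<delta>}" if d: "0 \<le> \<delta>" for \<delta>
  proof -
    have "{B. B \<subseteq> U \<and> Q B > \<delta>} = (\<lambda>W. U \<inter> f -` W) ` {W. W \<subseteq> Y \<and> Q' W > \<delta>}"
    proof (intro equalityI subsetI)
      fix B assume "B \<in> {B. B \<subseteq> U \<and> Q B > \<delta>}"
      then have B: "B \<subseteq> U" "Q B > \<delta>" by auto
      have s: "B = U \<inter> f -` (f ` B)"
      proof (rule ccontr)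
        assume "B \<noteq> U \<inter> f -` (f ` B)"
        then have "Q B \<le> 0" using z B(1) by blast
        then show False using d B(2) by linarith
      qed
      have "f ` B \<subseteq> Y" using B img by auto
      moreover have "Q' (f ` B) > \<delta>"
      proof -
        have "Q' (f ` B) = Q (U \<inter> f -` (f ` B))" using eq \<open>f ` B \<subseteq> Y\<close> by simp
        also have "\<dots> = Q B" by (simp only: s[symmetric])
        finally show ?thesis using B(2) by simp
      qed
      ultimately show "B \<in> (\<lambda>W. U \<inter> f -` W) ` {W. W \<subseteq> Y \<and> Q' W > \<delta>}" using s by blast
    next
      fix B assume "B \<in> (\<lambda>W. U \<inter> f -` W) ` {W. W \<subseteq> Y \<and> Q' W > \<delta>}"
      then obtain W where "W \<subseteq> Y" "Q' W > \<delta>" "B = U \<inter> f -` W" by auto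
      then show "B \<in> {B. B \<subseteq> U \<and> Q B > \<delta>}" using eq by auto
    qed
    moreover have "inj_on (\<lambda>W. U \<inter> f -` W) {W. W \<subseteq> Y \<and> Q' W > \<delta>}"
      by (rule inj_on_subset[OF inj]) auto
    ultimately show ?thesis by (simp add: finite_image_iff)
  qed
  then have "{\<delta>. 0 \<le> \<delta> \<and> \<delta> \<le> 1 \<and> finite {B. B \<subseteq> U \<and> Q B > \<delta>}}
           = {\<delta>. 0 \<le> \<delta> \<and> \<delta> \<le> 1 \<and> finite {W. W \<subseteq> Y \<and> Q' W > \<delta>}}" by blast
  then show ?thesis unfolding FF_def by simp
qed


lemma Fset01: "\<forall>a\<in>{max 0 (Kdeg W A + FF A W - 1) | W.
                  fuzzy_on_pow A W \<and> (\<forall>B. B \<subseteq> A \<longrightarrow> W B \<le> R B)}. 0 \<le> a \<and> a \<le> 1"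
proof
  fix a assume "a \<in> {max 0 (Kdeg W A + FF A W - 1) | W.
                fuzzy_on_pow A W \<and> (\<forall>B. B \<subseteq> A \<longrightarrow> W B \<le> R B)}"
  then obtain W where a: "a = max 0 (Kdeg W A + FF A W - 1)" and W: "fuzzy_on_pow A W" by auto
  have "0 \<le> Kdeg W A \<and> Kdeg W A \<le> 1" using W unfolding fuzzy_on_pow_def by (intro Kdeg01) auto
  then show "0 \<le> a \<and> a \<le> 1" using a FF01[of A W] by auto
qed

lemma gel_arith: "(IY::real) \<le> IU \<Longrightarrow> FU \<le> FY \<Longrightarrow>
   min 1 (1 - max 0 (K+IU-1) + FU) \<le> min 1 (1 - max 0 (K+IY-1)+FY)"
proof -
  assume h: "IY \<le> IU" "FU \<le> FY"
  have a: "max 0 (K+IY-1) \<le> max 0 (K+IU-1)" using h by (intro max.mono) auto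
  show ?thesis by (rule min.mono) (use a h in linarith)+
qed

lemma gamma_image:
  assumes img: "f ` U = Y" and rU: "\<forall>B. B\<subseteq>U \<longrightarrow> 0\<le>\<rho>U B \<and> \<rho>U B \<le> 1"
    and rY: "\<forall>W. W\<subseteq>Y \<longrightarrow> 0\<le>\<rho>Y W \<and> \<rho>Y W \<le> 1"
    and mono: "\<forall>W. W\<subseteq>Y \<longrightarrow> \<rho>Y W \<le> \<rho>U (U \<inter> f -` W)"
  shows "Gamma U \<rho>U \<le> Gamma Y \<rho>Y"
proof -
  have key: "Gamma U \<rho>U \<le> gel Y \<rho>Y R" if R: "fuzzy_on_pow Y R" for R
  proof -
    define R' where "R' B = (if B = U \<inter> f -` (f`B) then R (f`B) else 0)" for B
    have R01: "\<forall>W. W\<subseteq>Y \<longrightarrow> 0\<le>R W \<and> R W \<le> 1" using R unfolding fuzzy_on_pow_def by auto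
    have R'01: "\<forall>B. B\<subseteq>U \<longrightarrow> 0\<le>R' B \<and> R' B \<le> 1"
    proof (intro allI impI)
      fix B assume "B \<subseteq> U"
      then have "f ` B \<subseteq> Y" using img by auto
      then show "0\<le>R' B \<and> R' B \<le> 1" using R01 unfolding R'_def by auto
    qed
    then have R'f: "fuzzy_on_pow U R'" unfolding fuzzy_on_pow_def by auto
    have eqR: "\<forall>W. W\<subseteq>Y \<longrightarrow> R' (U \<inter> f -` W) = R W"
    proof (intro allI impI)
      fix W assume "W \<subseteq> Y"
      then have e: "f ` (U \<inter> f -` W) = W" by (rule sat_img[OF img])
      show "R' (U \<inter> f -` W) = R W" unfolding R'_def e by simp
    qed
    have zR: "\<forall>B. B \<subseteq> U \<longrightarrow> B \<noteq> U \<inter> f -` (f ` B) \<longrightarrow> R' B \<le> 0"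
      unfolding R'_def by simp
    have K: "Kdeg R' U = Kdeg R Y" by (rule Kdeg_trans[OF img R'01 R01 eqR zR])
    have IYb: "\<forall>b\<in>{min 1 (1 - R W + \<rho>Y W) | W. W \<subseteq> Y}. 0 \<le> b \<and> b \<le> 1"
    proof
      fix b assume "b \<in> {min 1 (1 - R W + \<rho>Y W) | W. W \<subseteq> Y}"
      then obtain W where "b = min 1 (1 - R W + \<rho>Y W)" "W \<subseteq> Y" by blast
      moreover have "0 \<le> R W \<and> R W \<le> 1" "0 \<le> \<rho>Y W" using R01 rY \<open>W \<subseteq> Y\<close> by auto
      ultimately show "0 \<le> b \<and> b \<le> 1" by auto
    qed
    have I: "fincl Y R \<rho>Y \<le> fincl U R' \<rho>U"
      unfolding fincl_def
    proof (rule finf_ge)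
      show "finf {min 1 (1 - R W + \<rho>Y W) | W. W \<subseteq> Y} \<le> 1" using finf01[OF IYb] by blast
      show "\<forall>a\<in>{min 1 (1 - R' B + \<rho>U B) | B. B \<subseteq> U}. finf {min 1 (1 - R W + \<rho>Y W) | W. W \<subseteq> Y} \<le> a"
      proof
        fix a assume "a \<in> {min 1 (1 - R' B + \<rho>U B) | B. B \<subseteq> U}"
        then obtain B where a: "a = min 1 (1 - R' B + \<rho>U B)" and B: "B \<subseteq> U" by auto
        have fB: "f ` B \<subseteq> Y" using B img by auto
        have le: "finf {min 1 (1 - R W + \<rho>Y W) | W. W \<subseteq> Y} \<le> min 1 (1 - R W + \<rho>Y W)" if "W \<subseteq> Y" for W
          using IYb that by (intro finf_le) auto
        show "finf {min 1 (1 - R W + \<rho>Y W) | W. W \<subseteq> Y} \<le> a"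
        proof (cases "B = U \<inter> f -` (f ` B)")
          case True
          have "R' B = R (f ` B)" using True unfolding R'_def by simp
          moreover have "\<rho>Y (f ` B) \<le> \<rho>U B"
          proof -
            have "\<rho>Y (f ` B) \<le> \<rho>U (U \<inter> f -` (f ` B))" using mono fB by simp
            also have "\<dots> = \<rho>U B" by (simp only: True[symmetric])
            finally show ?thesis .
          qed
          ultimately have "min 1 (1 - R (f`B) + \<rho>Y (f`B)) \<le> a" using a by auto
          then show ?thesis using le[OF fB] by linarith
        next
          case False
          then have "a = 1" using a rU B unfolding R'_def by auto
          then show ?thesis using finf01[OF IYb] by simp
        qed
      qed
    qed
    have FYb: "\<forall>a\<in>{max 0 (Kdeg W Y + FF Y W - 1) | W.
                  fuzzy_on_pow Y W \<and> (\<forall>B. B \<subseteq> Y \<longrightarrow> W B \<le> R B)}. 0 \<le> a \<and> a \<le> 1"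
      by (rule Fset01)
    have F: "fsup {max 0 (Kdeg W U + FF U W - 1) | W.
                  fuzzy_on_pow U W \<and> (\<forall>B. B \<subseteq> U \<longrightarrow> W B \<le> R' B)}
           \<le> fsup {max 0 (Kdeg W Y + FF Y W - 1) | W.
                  fuzzy_on_pow Y W \<and> (\<forall>B. B \<subseteq> Y \<longrightarrow> W B \<le> R B)}"
    proof (rule fsup_le)
      show "0 \<le> fsup {max 0 (Kdeg W Y + FF Y W - 1) | W.
                  fuzzy_on_pow Y W \<and> (\<forall>B. B \<subseteq> Y \<longrightarrow> W B \<le> R B)}" using fsup01[OF FYb] by blast
      show "\<forall>a\<in>{max 0 (Kdeg W U + FF U W - 1) | W.
                  fuzzy_on_pow U W \<and> (\<forall>B. B \<subseteq> U \<longrightarrow> W B \<le> R' B)}. a \<le> fsup {max 0 (Kdeg W Y + FF Y W - 1) | W.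
                  fuzzy_on_pow Y W \<and> (\<forall>B. B \<subseteq> Y \<longrightarrow> W B \<le> R B)}"
      proof
        fix a assume "a \<in> {max 0 (Kdeg W U + FF U W - 1) | W.
                  fuzzy_on_pow U W \<and> (\<forall>B. B \<subseteq> U \<longrightarrow> W B \<le> R' B)}"
        then obtain W' where a: "a = max 0 (Kdeg W' U + FF U W' - 1)" and W'f: "fuzzy_on_pow U W'"
          and W'le: "\<forall>B. B \<subseteq> U \<longrightarrow> W' B \<le> R' B" by auto
        define W'' where "W'' W = W' (U \<inter> f -` W)" for W
        have W'01: "\<forall>B. B\<subseteq>U \<longrightarrow> 0\<le>W' B \<and> W' B \<le> 1" using W'f unfolding fuzzy_on_pow_def by auto
        have W''01: "\<forall>W. W\<subseteq>Y \<longrightarrow> 0\<le>W'' W \<and> W'' W \<le> 1" using W'01 unfolding W''_def by auto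
        have eqW: "\<forall>W. W\<subseteq>Y \<longrightarrow> W' (U \<inter> f -` W) = W'' W" unfolding W''_def by simp
        have zW: "\<forall>B. B \<subseteq> U \<longrightarrow> B \<noteq> U \<inter> f -` (f ` B) \<longrightarrow> W' B \<le> 0"
        proof (intro allI impI)
          fix B assume "B \<subseteq> U" "B \<noteq> U \<inter> f -` (f ` B)"
          then have "W' B \<le> R' B" "R' B \<le> 0" using W'le zR by auto
          then show "W' B \<le> 0" by linarith
        qed
        have k1: "Kdeg W' U = Kdeg W'' Y" by (rule Kdeg_trans[OF img W'01 W''01 eqW zW])
        have k2: "FF U W' = FF Y W''" by (rule FF_trans[OF img eqW zW])
        have a2: "a = max 0 (Kdeg W'' Y + FF Y W'' - 1)" unfolding a k1 k2 ..
        have "fuzzy_on_pow Y W''" using W''01 unfolding fuzzy_on_pow_def by auto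
        moreover have "\<forall>B. B \<subseteq> Y \<longrightarrow> W'' B \<le> R B"
        proof (intro allI impI)
          fix B assume "B \<subseteq> Y"
          have "W' (U \<inter> f -` B) \<le> R' (U \<inter> f -` B)" using W'le by blast
          also have "\<dots> = R B" using eqR \<open>B \<subseteq> Y\<close> by blast
          finally show "W'' B \<le> R B" unfolding W''_def .
        qed
        ultimately have mem: "a \<in> {max 0 (Kdeg W Y + FF Y W - 1) | W.
                  fuzzy_on_pow Y W \<and> (\<forall>B. B \<subseteq> Y \<longrightarrow> W B \<le> R B)}" using a2 by blast
        have bnd: "\<forall>b\<in>{max 0 (Kdeg W Y + FF Y W - 1) | W.
                  fuzzy_on_pow Y W \<and> (\<forall>B. B \<subseteq> Y \<longrightarrow> W B \<le> R B)}. b \<le> 1" using FYb by blast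
        show "a \<le> fsup {max 0 (Kdeg W Y + FF Y W - 1) | W.
                  fuzzy_on_pow Y W \<and> (\<forall>B. B \<subseteq> Y \<longrightarrow> W B \<le> R B)}"
          by (rule fsup_ge[OF mem bnd])
      qed
    qed
    have "gel U \<rho>U R' \<le> gel Y \<rho>Y R" unfolding gel_def K by (rule gel_arith[OF I F])
    moreover have "Gamma U \<rho>U \<le> gel U \<rho>U R'" unfolding Gamma_gel
      using R'f gel01[OF _ rU] by (intro finf_le) auto
    ultimately show ?thesis by linarith
  qed
  show ?thesis unfolding Gamma_gel[of Y]
    using key Gamma01[OF rU] by (intro finf_ge) auto
qed


lemma fsup_pos: "0 < fsup A \<Longrightarrow> \<exists>a\<in>A. 0 < a"
proof (rule ccontr)
  assume "0 < fsup A" "\<not> (\<exists>a\<in>A. 0 < a)"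
  then have "fsup A \<le> 0" by (intro fsup_le) auto
  then show False using \<open>0 < fsup A\<close> by linarith
qed

lemma preopen01:
  assumes "fuzzifying_topology Z \<tau>"
  shows "0 \<le> preopen Z \<tau> A \<and> preopen Z \<tau> A \<le> 1"
proof -
  have t: "\<forall>B. B \<subseteq> Z \<longrightarrow> 0 \<le> \<tau> B \<and> \<tau> B \<le> 1"
    using assms unfolding fuzzifying_topology_def fuzzy_on_pow_def by blast
  have nb: "0 \<le> fnbhd \<tau> x C \<and> fnbhd \<tau> x C \<le> 1" if "C \<subseteq> Z" for x C
    unfolding fnbhd_def using t that by (intro fsup01) auto
  have cl: "0 \<le> fcl Z \<tau> A x \<and> fcl Z \<tau> A x \<le> 1" for x
    unfolding fcl_def using nb[of "Z - A" x] by auto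
  have fi: "0 \<le> fint Z \<tau> (fcl Z \<tau> A) x \<and> fint Z \<tau> (fcl Z \<tau> A) x \<le> 1" for x
    unfolding fint_def
  proof (rule fsup01, intro ballI)
    fix a assume "a \<in> {min (\<tau> B) (finf (fcl Z \<tau> A ` B)) | B. x \<in> B \<and> B \<subseteq> Z}"
    then obtain B where a: "a = min (\<tau> B) (finf (fcl Z \<tau> A ` B))" and B: "B \<subseteq> Z" by auto
    have "0 \<le> finf (fcl Z \<tau> A ` B) \<and> finf (fcl Z \<tau> A ` B) \<le> 1" using cl by (intro finf01) auto
    then show "0 \<le> a \<and> a \<le> 1" using a t B by auto
  qed
  show ?thesis unfolding preopen_def using fi by (intro finf01) auto
qed

lemma beta_elems:
  assumes "\<forall>s\<in>S. fuzzifying_topology (Xs s) (\<tau> s)"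
  shows "\<forall>a\<in>{finf {preopen (Xs s) (\<tau> s) (Vs s) | s. s \<in> T} | T Vs.
      finite T \<and> T \<subseteq> S \<and> (\<forall>s\<in>T. Vs s \<subseteq> Xs s) \<and>
      {f \<in> PiE S Xs. \<forall>s\<in>T. f s \<in> Vs s} = V}. 0 \<le> a \<and> a \<le> 1"
proof
  fix a assume "a \<in> {finf {preopen (Xs s) (\<tau> s) (Vs s) | s. s \<in> T} | T Vs.
      finite T \<and> T \<subseteq> S \<and> (\<forall>s\<in>T. Vs s \<subseteq> Xs s) \<and>
      {f \<in> PiE S Xs. \<forall>s\<in>T. f s \<in> Vs s} = V}"
  then obtain T Vs where a: "a = finf {preopen (Xs s) (\<tau> s) (Vs s) | s. s \<in> T}" and T: "T \<subseteq> S" by auto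
  show "0 \<le> a \<and> a \<le> 1" unfolding a using T assms preopen01 by (intro finf01) blast
qed

lemma beta01:
  assumes "\<forall>s\<in>S. fuzzifying_topology (Xs s) (\<tau> s)"
  shows "0 \<le> prod_beta S Xs \<tau> V \<and> prod_beta S Xs \<tau> V \<le> 1"
  unfolding prod_beta_def by (rule fsup01[OF beta_elems[OF assms]])

lemma pre01:
  assumes "\<forall>s\<in>S. fuzzifying_topology (Xs s) (\<tau> s)"
  shows "0 \<le> prod_pre S Xs \<tau> V \<and> prod_pre S Xs \<tau> V \<le> 1"
  unfolding prod_pre_def
proof (rule fsup01, intro ballI)
  fix a assume "a \<in> {finf (prod_beta S Xs \<tau> ` \<B>) | \<B>. \<Union>\<B> = V}"
  then obtain \<B> where a: "a = finf (prod_beta S Xs \<tau> ` \<B>)" by auto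
  show "0 \<le> a \<and> a \<le> 1" unfolding a using beta01[OF assms] by (intro finf01) blast
qed

lemma beta_cyl:
  assumes "t \<in> S" "W \<subseteq> Xs t" "\<forall>s\<in>S. fuzzifying_topology (Xs s) (\<tau> s)"
  shows "preopen (Xs t) (\<tau> t) W \<le> prod_beta S Xs \<tau> {f \<in> PiE S Xs. f t \<in> W}"
proof -
  have e: "{preopen (Xs s) (\<tau> s) ((\<lambda>_. W) s) | s. s \<in> {t}} = {preopen (Xs t) (\<tau> t) W}" by auto
  have m: "finf {preopen (Xs s) (\<tau> s) ((\<lambda>_. W) s) | s. s \<in> {t}} \<in> {finf {preopen (Xs s) (\<tau> s) (Vs s) | s. s \<in> T} | T Vs.
      finite T \<and> T \<subseteq> S \<and> (\<forall>s\<in>T. Vs s \<subseteq> Xs s) \<and>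
      {f \<in> PiE S Xs. \<forall>s\<in>T. f s \<in> Vs s} = {f \<in> PiE S Xs. f t \<in> W}}"
    by (rule CollectI, rule exI[of _ "{t}"], rule exI[of _ "\<lambda>_. W"]) (use assms(1,2) in auto)
  have "finf {preopen (Xs t) (\<tau> t) W} = preopen (Xs t) (\<tau> t) W" by (simp add: finf_def)
  then have "preopen (Xs t) (\<tau> t) W \<le> fsup {finf {preopen (Xs s) (\<tau> s) (Vs s) | s. s \<in> T} | T Vs.
      finite T \<and> T \<subseteq> S \<and> (\<forall>s\<in>T. Vs s \<subseteq> Xs s) \<and>
      {f \<in> PiE S Xs. \<forall>s\<in>T. f s \<in> Vs s} = {f \<in> PiE S Xs. f t \<in> W}}"
    using fsup_ge[OF m] e beta_elems[OF assms(3)] by auto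
  then show ?thesis unfolding prod_beta_def .
qed


theorem theorem3p2:
  fixes S :: "'s set" and Xs :: "'s \<Rightarrow> 'a set" and \<tau> :: "'s \<Rightarrow> 'a set \<Rightarrow> real"
  assumes "\<forall>s\<in>S. fuzzifying_topology (Xs s) (\<tau> s)"
  shows "fsup {min (Gamma U (frestrict (PiE S Xs) (prod_pre S Xs \<tau>) U))
                   (fsup {fsup {prod_pre S Xs \<tau> V | V. x \<in> V \<and> V \<subseteq> U} | x. x \<in> PiE S Xs})
               | U. U \<subseteq> PiE S Xs}
         \<le> fsup {finf {Gamma (Xs t) (preopen (Xs t) (\<tau> t)) | t. t \<in> S - T} | T. finite T \<and> T \<subseteq> S}"
proof -
  define X where "X = PiE S Xs"
  define P where "P = prod_pre S Xs \<tau>"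
  define RS where "RS = {finf {Gamma (Xs t) (preopen (Xs t) (\<tau> t)) | t. t \<in> S - T} | T. finite T \<and> T \<subseteq> S}"
  define N where "N U = fsup {fsup {P V | V. x \<in> V \<and> V \<subseteq> U} | x. x \<in> X}" for U
  have G01: "0 \<le> Gamma (Xs t) (preopen (Xs t) (\<tau> t)) \<and> Gamma (Xs t) (preopen (Xs t) (\<tau> t)) \<le> 1"
    if "t \<in> S" for t
    using preopen01 assms that by (intro Gamma01) blast
  have RS01: "\<forall>a\<in>RS. 0 \<le> a \<and> a \<le> 1"
  proof
    fix a assume "a \<in> RS"
    then obtain T where a: "a = finf {Gamma (Xs t) (preopen (Xs t) (\<tau> t)) | t. t \<in> S - T}"
      unfolding RS_def by blast
    show "0 \<le> a \<and> a \<le> 1" unfolding a using G01 by (intro finf01) blast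
  qed
  have RSpos: "0 \<le> fsup RS" using fsup01[OF RS01] by blast
  have P01: "0 \<le> P V \<and> P V \<le> 1" for V unfolding P_def by (rule pre01[OF assms])
  have beta0: "0 \<le> prod_beta S Xs \<tau> V" for V using beta01[OF assms] by blast
  have main: "min (Gamma U (frestrict X P U)) (N U) \<le> fsup RS" if U: "U \<subseteq> X" for U
  proof (cases "N U \<le> 0")
    case True
    then show ?thesis using RSpos by linarith
  next
    case False
    then have "0 < N U" by linarith
    then have "\<exists>a\<in>{fsup {P V | V. x \<in> V \<and> V \<subseteq> U} | x. x \<in> X}. 0 < a"
      unfolding N_def by (rule fsup_pos)
    then obtain x where x: "x \<in> X" and x0: "0 < fsup {P V | V. x \<in> V \<and> V \<subseteq> U}" by blast
    have "\<exists>a\<in>{P V | V. x \<in> V \<and> V \<subseteq> U}. 0 < a" using x0 by (rule fsup_pos)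
    then obtain V where V: "x \<in> V" "V \<subseteq> U" and V0: "0 < P V" by blast
    have "\<exists>a\<in>{finf (prod_beta S Xs \<tau> ` \<B>) | \<B>. \<Union>\<B> = V}. 0 < a"
      using V0 unfolding P_def prod_pre_def by (rule fsup_pos)
    then obtain \<B> where B: "\<Union>\<B> = V" and B00: "0 < finf (prod_beta S Xs \<tau> ` \<B>)" by blast
    obtain B0 where B0: "B0 \<in> \<B>" "x \<in> B0" using V(1) B by blast
    have "finf (prod_beta S Xs \<tau> ` \<B>) \<le> prod_beta S Xs \<tau> B0"
      using B0 beta0 by (intro finf_le) auto
    then have "0 < prod_beta S Xs \<tau> B0" using B00 by linarith
    then have "\<exists>a\<in>{finf {preopen (Xs s) (\<tau> s) (Vs s) | s. s \<in> T} | T Vs.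
      finite T \<and> T \<subseteq> S \<and> (\<forall>s\<in>T. Vs s \<subseteq> Xs s) \<and>
      {f \<in> PiE S Xs. \<forall>s\<in>T. f s \<in> Vs s} = B0}. 0 < a"
      unfolding prod_beta_def by (rule fsup_pos)
    then obtain a where "a \<in> {finf {preopen (Xs s) (\<tau> s) (Vs s) | s. s \<in> T} | T Vs.
      finite T \<and> T \<subseteq> S \<and> (\<forall>s\<in>T. Vs s \<subseteq> Xs s) \<and>
      {f \<in> PiE S Xs. \<forall>s\<in>T. f s \<in> Vs s} = B0}"
      by blast
    then obtain T Vs where T: "finite T" "T \<subseteq> S" "\<forall>s\<in>T. Vs s \<subseteq> Xs s"
       and cyl: "{f \<in> PiE S Xs. \<forall>s\<in>T. f s \<in> Vs s} = B0"
      by blast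
    have B0U: "B0 \<subseteq> U" using B0 B V by blast
    have GU: "Gamma U (frestrict X P U) \<le> Gamma (Xs t) (preopen (Xs t) (\<tau> t))" if t: "t \<in> S - T" for t
    proof (rule gamma_image)
      show "(\<lambda>u. u t) ` U = Xs t"
      proof (intro equalityI subsetI)
        fix y assume "y \<in> (\<lambda>u. u t) ` U"
        then obtain u where "u \<in> U" "y = u t" by blast
        then show "y \<in> Xs t" using U t unfolding X_def by (auto intro: PiE_mem)
      next
        fix y assume y: "y \<in> Xs t"
        have xB: "x \<in> PiE S Xs" "\<forall>s\<in>T. x s \<in> Vs s" using B0(2) cyl by auto
        have "x(t := y) \<in> PiE (insert t S) Xs" by (rule PiE_fun_upd[OF y xB(1)])
        then have "x(t := y) \<in> PiE S Xs" using t by (simp add: insert_absorb)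
        moreover have "\<forall>s\<in>T. (x(t := y)) s \<in> Vs s" using xB(2) t by auto
        ultimately have "x(t := y) \<in> B0" using cyl by blast
        then have "x(t := y) \<in> U" using B0U by blast
        then show "y \<in> (\<lambda>u. u t) ` U" by (rule rev_image_eqI) simp
      qed
      show "\<forall>B. B \<subseteq> U \<longrightarrow> 0 \<le> frestrict X P U B \<and> frestrict X P U B \<le> 1"
        unfolding frestrict_def using P01 by (intro allI impI fsup01) auto
      show "\<forall>W. W \<subseteq> Xs t \<longrightarrow> 0 \<le> preopen (Xs t) (\<tau> t) W \<and> preopen (Xs t) (\<tau> t) W \<le> 1"
        using preopen01 assms t by blast
      show "\<forall>W. W \<subseteq> Xs t \<longrightarrow> preopen (Xs t) (\<tau> t) W \<le> frestrict X P U (U \<inter> (\<lambda>u. u t) -` W)"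
      proof (intro allI impI)
        fix W assume W: "W \<subseteq> Xs t"
        define C where "C = {f \<in> PiE S Xs. f t \<in> W}"
        have "preopen (Xs t) (\<tau> t) W \<le> prod_beta S Xs \<tau> C"
          unfolding C_def using t W assms by (intro beta_cyl) auto
        also have "\<dots> \<le> P C"
        proof -
          have m: "finf (prod_beta S Xs \<tau> ` {C}) \<in> {finf (prod_beta S Xs \<tau> ` \<B>) | \<B>. \<Union>\<B> = C}" by blast
          have bnd: "\<forall>b\<in>{finf (prod_beta S Xs \<tau> ` \<B>) | \<B>. \<Union>\<B> = C}. b \<le> 1"
          proof
            fix b assume "b \<in> {finf (prod_beta S Xs \<tau> ` \<B>) | \<B>. \<Union>\<B> = C}"
            then obtain \<B> where "b = finf (prod_beta S Xs \<tau> ` \<B>)" by blast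
            moreover have "0 \<le> finf (prod_beta S Xs \<tau> ` \<B>) \<and> finf (prod_beta S Xs \<tau> ` \<B>) \<le> 1"
              using beta01[OF assms] by (intro finf01) blast
            ultimately show "b \<le> 1" by simp
          qed
          have "finf (prod_beta S Xs \<tau> ` {C}) = prod_beta S Xs \<tau> C" by (simp add: finf_def)
          then show ?thesis using fsup_ge[OF m bnd] unfolding P_def prod_pre_def by simp
        qed
        also have "\<dots> \<le> frestrict X P U (U \<inter> (\<lambda>u. u t) -` W)"
        proof -
          have m: "P C \<in> {P V | V. V \<subseteq> X \<and> V \<inter> U = U \<inter> (\<lambda>u. u t) -` W}"
            using U unfolding C_def X_def by blast
          have bnd: "\<forall>b\<in>{P V | V. V \<subseteq> X \<and> V \<inter> U = U \<inter> (\<lambda>u. u t) -` W}. b \<le> 1" using P01 by blast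
          show ?thesis unfolding frestrict_def using fsup_ge[OF m bnd] .
        qed
        finally show "preopen (Xs t) (\<tau> t) W \<le> frestrict X P U (U \<inter> (\<lambda>u. u t) -` W)" .
      qed
    qed
    have GU1: "Gamma U (frestrict X P U) \<le> 1"
    proof -
      have "\<forall>B. B \<subseteq> U \<longrightarrow> 0 \<le> frestrict X P U B \<and> frestrict X P U B \<le> 1"
        unfolding frestrict_def using P01 by (intro allI impI fsup01) auto
      then show ?thesis using Gamma01 by blast
    qed
    have "Gamma U (frestrict X P U) \<le> finf {Gamma (Xs t) (preopen (Xs t) (\<tau> t)) | t. t \<in> S - T}"
      using GU GU1 by (intro finf_ge) auto
    also have "\<dots> \<le> fsup RS"
    proof -
      have "finf {Gamma (Xs t) (preopen (Xs t) (\<tau> t)) | t. t \<in> S - T} \<in> RS" unfolding RS_def using T by blast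
      then show ?thesis using RS01 fsup_ge by blast
    qed
    finally show ?thesis by linarith
  qed
  have "fsup {min (Gamma U (frestrict X P U)) (N U) | U. U \<subseteq> X} \<le> fsup RS"
  proof (rule fsup_le[OF _ RSpos], rule ballI)
    fix a assume "a \<in> {min (Gamma U (frestrict X P U)) (N U) | U. U \<subseteq> X}"
    then obtain U where "U \<subseteq> X" "a = min (Gamma U (frestrict X P U)) (N U)" by blast
    then show "a \<le> fsup RS" using main by simp
  qed
  then show ?thesis unfolding X_def P_def RS_def N_def .
qed

end
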